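(* Let $n\geq 2$ and $0\leq s<\pi/4$. Then for the metric $g_{\pi/4,0}$, $$K_s(t)=\begin{cases}1,& 0\le|t|<\ell(s),\\ -1+4\sin^2(s)\,F(|t|,s)^{-4},& |t|>\ell(s),\end{cases}$$ where $\ell(s)=\arccos\big(\cos(\pi/4)/\cos(s)\big)$ and $F(t,s)=\cosh(t-\ell(s))+\sqrt{\cos(2s)}\,\sinh(t-\ell(s))$.
   Context: Fix $\varphi\in C^\infty(\mathbb{R})$ with $0\le\varphi\le1$, $\varphi(x)=0$ for $x\le0$, $\varphi(x)=1$ for $x\ge1$, and let $H$ be the Heaviside function ($H(x)=1$ for $x>0$, $H(x)=0$ for $x\le0$). For $r>0$, $\epsilon\ge0$ with $r+\epsilon<\pi/2$ and $\rho\ge0$ set $K^\parallel_{r,\epsilon}(\rho)=1-2\varphi((\rho-r)/\epsilon)$ if $\epsilon>0$ and $K^\parallel_{r,0}(\rho)=1-2H(\rho-r)$. Let $\mathcal{A}_{r,\epsilon}$ solve $\mathcal{A}''+K^\parallel_{r,\epsilon}\mathcal{A}=0$, $\mathcal{A}(0)=0$, $\mathcal{A}'(0)=1$ (for $\epsilon=0$: the unique $C^1$ function with these initial values solving the equation on $\rho\ne r$). Let $g_{r,\epsilon}=d\rho^2+\mathcal{A}_{r,\epsilon}(\rho)^2\mathring g$ on $\mathbb{R}^{n+1}$ in polar coordinates ($\mathring g$ the round metric on $S^n$). Every unit speed geodesic $\gamma$ lies in a 2-plane $\Sigma_\gamma$ through the origin. For $\mu=(s,r,\epsilon)$ with $s\ge0$,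 $\rho_\mu(t)$ denotes the radial coordinate $\rho(\gamma(t))$ of a unit speed geodesic whose minimal distance to the origin is $s$, attained at $t=0$: for $s>0$ it is the solution of $\rho''=\frac{\mathcal{A}_{r,\epsilon}'(\rho)}{\mathcal{A}_{r,\epsilon}(\rho)}(1-(\rho')^2)$, $\rho(0)=s$, $\rho'(0)=0$, and $\rho_{0,r,\epsilon}(t)=t$. Set $K^\perp_{r,\epsilon}(\rho)=\mathcal{A}_{r,\epsilon}(\rho)^{-2}\big(1-\mathcal{A}_{r,\epsilon}'(\rho)^2\big)$ and $K_{s,r,\epsilon}(t)=\rho_\mu'(t)^2K^\parallel_{r,\epsilon}(\rho_\mu(t))+(1-\rho_\mu'(t)^2)K^\perp_{r,\epsilon}(\rho_\mu(t))$; for $n\ge2$ this is the sectional curvature of the 2-plane spanned by $\gamma'(t)$ and a vector orthogonal to $\Sigma_\gamma$. Write $K_s=K_{s,\pi/4,0}$. *)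

theory Defs
  imports "HOL-Analysis.Analysis"
begin

definition heaviside :: "real \<Rightarrow> real" where
  "heaviside x = (if x > 0 then 1 else 0)"

text \<open>Radial curvature K^par_{r,0}(rho) = 1 - 2 H(rho - r) (the case epsilon = 0).\<close>
definition Kpar :: "real \<Rightarrow> real \<Rightarrow> real" where
  "Kpar r \<rho> = 1 - 2 * heaviside (\<rho> - r)"

definition is_warp :: "real \<Rightarrow> (real \<Rightarrow> real) \<Rightarrow> bool" where
  "is_warp r f \<longleftrightarrow> (\<exists>f'. continuous_on UNIV f' \<and>
      (\<forall>x. (f has_real_derivative f' x) (at x)) \<and>
      (\<forall>x. x \<noteq> r \<longrightarrow> (f' has_real_derivative (- Kpar r x * f x)) (at x)) \<and>
      f 0 = 0 \<and> f' 0 = 1)"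

definition warp :: "real \<Rightarrow> real \<Rightarrow> real" where
  "warp r = (THE f. is_warp r f)"

definition Kperp :: "real \<Rightarrow> real \<Rightarrow> real" where
  "Kperp r \<rho> = (1 - (deriv (warp r) \<rho>)\<^sup>2) / (warp r \<rho>)\<^sup>2"

text \<open>Radial coordinate of a unit speed geodesic with minimal distance s > 0 to the origin,
  attained at t = 0: solution of rho'' = (A'(rho)/A(rho)) (1 - rho'^2), rho(0)=s, rho'(0)=0.\<close>
definition is_geod_radius :: "real \<Rightarrow> real \<Rightarrow> (real \<Rightarrow> real) \<Rightarrow> bool" where
  "is_geod_radius r s p \<longleftrightarrow> (\<exists>p'.
      (\<forall>t. (p has_real_derivative p' t) (at t)) \<and>
      (\<forall>t. (p' has_real_derivative
              (deriv (warp r) (p t) / warp r (p t) * (1 - (p' t)\<^sup>2))) (at t)) \<and>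
      p 0 = s \<and> p' 0 = 0)"

definition geod_radius :: "real \<Rightarrow> real \<Rightarrow> real \<Rightarrow> real" where
  "geod_radius r s = (THE p. is_geod_radius r s p)"

text \<open>K_{s,r,0}(t). For s = 0 the geodesic passes through the origin, its radial coordinate
  is |t| and rho'^2 = 1, so K = K^par(|t|).\<close>
definition Kcurv :: "real \<Rightarrow> real \<Rightarrow> real \<Rightarrow> real" where
  "Kcurv s r t =
     (if s = 0 then Kpar r \<bar>t\<bar>
      else (let \<rho> = geod_radius r s t; d = deriv (geod_radius r s) t in
            d\<^sup>2 * Kpar r \<rho> + (1 - d\<^sup>2) * Kperp r \<rho>))"

definition ell :: "real \<Rightarrow> real" where
  "ell s = arccos (cos (pi/4) / cos s)"

definition Ffun :: "real \<Rightarrow> real \<Rightarrow> real" where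
  "Ffun t s = cosh (t - ell s) + sqrt (cos (2 * s)) * sinh (t - ell s)"

end

theory Submission
  imports Defs
begin



lemma DERIV_glue:
  fixes f g h :: "real \<Rightarrow> real"
  assumes d: "d > 0"
    and L: "\<And>x. a - d < x \<Longrightarrow> x \<le> a \<Longrightarrow> f x = g x"
    and R: "\<And>x. a \<le> x \<Longrightarrow> x < a + d \<Longrightarrow> f x = h x"
    and g: "DERIV g a :> D" and h: "DERIV h a :> D"
  shows "DERIV f a :> D"
proof -
  have fa: "f a = g a" "f a = h a" using L[of a] R[of a] d by auto
  have gl: "((\<lambda>x. (g (a + x) - g a) / x) \<longlongrightarrow> D) (at_left 0)"
    using g unfolding DERIV_def filterlim_at_split by blast
  have hr: "((\<lambda>x. (h (a + x) - h a) / x) \<longlongrightarrow> D) (at_right 0)"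
    using h unfolding DERIV_def filterlim_at_split by blast
  have "((\<lambda>x. (f (a + x) - f a) / x) \<longlongrightarrow> D) (at_left 0)"
  proof (rule Lim_transform_eventually[OF gl])
    show "\<forall>\<^sub>F x in at_left 0. (g (a + x) - g a) / x = (f (a + x) - f a) / x"
    proof -
      have "eventually (\<lambda>x. x \<in> {-d<..<0}) (at_left (0::real))" using d by (intro eventually_at_left_real) simp
      then show ?thesis by (rule eventually_mono) (auto simp: L fa(1))
    qed
  qed
  moreover have "((\<lambda>x. (f (a + x) - f a) / x) \<longlongrightarrow> D) (at_right 0)"
  proof (rule Lim_transform_eventually[OF hr])
    show "\<forall>\<^sub>F x in at_right 0. (h (a + x) - h a) / x = (f (a + x) - f a) / x"
    proof -
      have "eventually (\<lambda>x. x \<in> {0<..<d}) (at_right (0::real))" using d by (intro eventually_at_right_real) simp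
      then show ?thesis by (rule eventually_mono) (auto simp: R fa(2))
    qed
  qed
  ultimately show ?thesis unfolding DERIV_def filterlim_at_split by blast
qed


lemma gronwall_fwd:
  fixes E E' :: "real \<Rightarrow> real"
  assumes ab: "a \<le> b" and cont: "continuous_on {a..b} E"
    and der: "\<And>x. a < x \<Longrightarrow> x < b \<Longrightarrow> (E has_real_derivative E' x) (at x)"
    and le: "\<And>x. a < x \<Longrightarrow> x < b \<Longrightarrow> E' x \<le> C * E x"
    and nn: "E b \<ge> 0" and E0: "E a = 0"
  shows "E b = 0"
proof (cases "a = b")
  case True then show ?thesis using E0 by simp
next
  case False
  then have lt: "a < b" using ab by simp
  define G where "G x = E x * exp (- C * x)" for x
  have "continuous_on {a..b} G" unfolding G_def
    by (intro continuous_intros cont)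
  moreover have "\<And>x. a < x \<Longrightarrow> x < b \<Longrightarrow> DERIV G x :> (E' x - C * E x) * exp (- C * x)"
    unfolding G_def by (auto intro!: derivative_eq_intros der simp: algebra_simps)
  ultimately obtain l z where z: "a < z" "z < b" "DERIV G z :> l" "G b - G a = (b - a) * l"
    using MVT[OF lt, of G] by (meson real_differentiable_def)
  then have "l = (E' z - C * E z) * exp (- C * z)"
    using \<open>\<And>x. a < x \<Longrightarrow> x < b \<Longrightarrow> DERIV G x :> _\<close> DERIV_unique by blast
  then have "l \<le> 0" using le[OF z(1,2)] by (simp add: mult_nonpos_nonneg)
  then have "G b \<le> 0" using z(4) lt E0 unfolding G_def
    by (simp add: mult_nonneg_nonpos)
  then have "E b \<le> 0" unfolding G_def by (simp add: mult_le_0_iff)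
  then show ?thesis using nn by simp
qed

lemma gronwall_bwd:
  fixes E E' :: "real \<Rightarrow> real"
  assumes ab: "a \<le> b" and cont: "continuous_on {a..b} E"
    and der: "\<And>x. a < x \<Longrightarrow> x < b \<Longrightarrow> (E has_real_derivative E' x) (at x)"
    and le: "\<And>x. a < x \<Longrightarrow> x < b \<Longrightarrow> - C * E x \<le> E' x"
    and nn: "E a \<ge> 0" and E0: "E b = 0"
  shows "E a = 0"
proof (cases "a = b")
  case True then show ?thesis using E0 by simp
next
  case False
  then have lt: "a < b" using ab by simp
  define G where "G x = E x * exp (C * x)" for x
  have "continuous_on {a..b} G" unfolding G_def
    by (intro continuous_intros cont)
  moreover have "\<And>x. a < x \<Longrightarrow> x < b \<Longrightarrow> DERIV G x :> (E' x + C * E x) * exp (C * x)"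
    unfolding G_def by (auto intro!: derivative_eq_intros der simp: algebra_simps)
  ultimately obtain l z where z: "a < z" "z < b" "DERIV G z :> l" "G b - G a = (b - a) * l"
    using MVT[OF lt, of G] by (meson real_differentiable_def)
  then have "l = (E' z + C * E z) * exp (C * z)"
    using \<open>\<And>x. a < x \<Longrightarrow> x < b \<Longrightarrow> DERIV G x :> _\<close> DERIV_unique by blast
  then have "l \<ge> 0" using le[OF z(1,2)] by simp
  moreover have "G b = 0" unfolding G_def using E0 by simp
  moreover have "(b - a) * l \<ge> 0" using lt \<open>l \<ge> 0\<close> by simp
  ultimately have "G a \<le> 0" using z(4) by linarith
  then have "E a \<le> 0" unfolding G_def by (simp add: mult_le_0_iff)
  then show ?thesis using nn by simp
qed



lemma Kpar_cases: "Kpar r x = (if x > r then -1 else 1)"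
  by (simp add: Kpar_def heaviside_def)

lemma warp_unique:
  assumes r: "r > 0" and F: "is_warp r f" and G: "is_warp r g"
  shows "f = g"
proof -
  obtain f' where f': "continuous_on UNIV f'" "\<And>x. (f has_real_derivative f' x) (at x)"
    "\<And>x. x \<noteq> r \<Longrightarrow> (f' has_real_derivative (- Kpar r x * f x)) (at x)" "f 0 = 0" "f' 0 = 1"
    using F unfolding is_warp_def by blast
  obtain g' where g': "continuous_on UNIV g'" "\<And>x. (g has_real_derivative g' x) (at x)"
    "\<And>x. x \<noteq> r \<Longrightarrow> (g' has_real_derivative (- Kpar r x * g x)) (at x)" "g 0 = 0" "g' 0 = 1"
    using G unfolding is_warp_def by blast
  define E where "E x = (f x - g x)\<^sup>2 + (f' x - g' x)\<^sup>2" for x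
  define E' where "E' x = 2 * (f x - g x) * (f' x - g' x) + 2 * (f' x - g' x) * (- Kpar r x * f x + Kpar r x * g x)" for x
  have cf: "continuous_on UNIV f" using f'(2)
    by (meson DERIV_isCont continuous_at_imp_continuous_on)
  have cg: "continuous_on UNIV g" using g'(2)
    by (meson DERIV_isCont continuous_at_imp_continuous_on)
  have cE: "continuous_on S E" for S unfolding E_def
    by (intro continuous_intros continuous_on_subset[OF cf] continuous_on_subset[OF cg]
        continuous_on_subset[OF f'(1)] continuous_on_subset[OF g'(1)]) auto
  have dE: "(E has_real_derivative E' x) (at x)" if "x \<noteq> r" for x
    unfolding E_def E'_def
    by (auto intro!: derivative_eq_intros f'(2) g'(2) f'(3)[OF that] g'(3)[OF that] simp: algebra_simps)
  have bE: "\<bar>E' x\<bar> \<le> 2 * E x" for x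
  proof -
    have "E' x = 2 * (f x - g x) * (f' x - g' x) * (1 - Kpar r x)"
      unfolding E'_def by (simp add: algebra_simps)
    moreover have "\<bar>1 - Kpar r x\<bar> \<le> 2" by (simp add: Kpar_cases)
    moreover have "\<bar>2 * (f x - g x) * (f' x - g' x)\<bar> \<le> E x"
    proof -
      define u where "u = f x - g x"
      define v where "v = f' x - g' x"
      have "0 \<le> (\<bar>u\<bar> - \<bar>v\<bar>)\<^sup>2" by simp
      also have "\<dots> = u\<^sup>2 + v\<^sup>2 - 2 * \<bar>u\<bar> * \<bar>v\<bar>"
        by (simp add: power2_diff)
      finally have "\<bar>2 * u * v\<bar> \<le> u\<^sup>2 + v\<^sup>2" by (simp add: abs_mult)
      then show ?thesis unfolding E_def u_def v_def .
    qed
    moreover have "E x \<ge> 0" unfolding E_def by simp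
    ultimately have "\<bar>E' x\<bar> \<le> E x * 2"
      by (metis abs_ge_zero abs_mult mult_mono)
    then show ?thesis by simp
  qed
  have nn: "E x \<ge> 0" for x unfolding E_def by simp
  have E0: "E 0 = 0" unfolding E_def using f' g' by simp
  have le1: "E' x \<le> 2 * E x" and ge1: "- 2 * E x \<le> E' x" for x
    using bE[of x] by (simp_all add: abs_le_iff)
  have Er: "E r = 0"
    using r by (intro gronwall_fwd[of 0 r E E' 2] cE dE le1 nn E0) auto
  have "E x = 0" for x
  proof -
    consider "r \<le> x" | "0 \<le> x" "x < r" | "x < 0" by linarith
    then show ?thesis
    proof cases
      case 1 show ?thesis
        using 1 by (intro gronwall_fwd[of r x E E' 2] cE dE le1 nn Er) auto
    next
      case 2 show ?thesis
        using 2 by (intro gronwall_fwd[of 0 x E E' 2] cE dE le1 nn E0) auto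
    next
      case 3 show ?thesis
        using 3 r by (intro gronwall_bwd[of x 0 E E' 2] cE dE ge1 nn E0) auto
    qed
  qed
  then have "f x = g x" for x unfolding E_def
    by (simp add: sum_power2_eq_zero_iff)
  then show ?thesis by blast
qed




definition A0 :: "real \<Rightarrow> real" where
  "A0 x = (if x \<le> pi/4 then sin x else sqrt 2 / 2 * exp (x - pi/4))"
definition A0' :: "real \<Rightarrow> real" where
  "A0' x = (if x \<le> pi/4 then cos x else sqrt 2 / 2 * exp (x - pi/4))"

lemma A0_deriv: "(A0 has_real_derivative A0' x) (at x)"
proof -
  consider "x < pi/4" | "x = pi/4" | "x > pi/4" by linarith
  then show ?thesis
  proof cases
    case 1
    have "(sin has_real_derivative A0' x) (at x)" using DERIV_sin[of x] 1 by (simp add: A0'_def)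
    then show ?thesis
      by (rule has_field_derivative_transform_within_open[of _ _ _ "{..<pi/4}"])
         (use 1 in \<open>auto simp: A0_def A0'_def\<close>)
  next
    case 3
    have "((\<lambda>x. sqrt 2 / 2 * exp (x - pi/4)) has_real_derivative A0' x) (at x)"
      using 3 by (auto intro!: derivative_eq_intros simp: A0'_def)
    then show ?thesis
      by (rule has_field_derivative_transform_within_open[of _ _ _ "{pi/4<..}"])
         (use 3 in \<open>auto simp: A0_def A0'_def\<close>)
  next
    case 2
    show ?thesis unfolding 2
    proof (rule DERIV_glue[of 1 _ _ sin "\<lambda>x. sqrt 2 / 2 * exp (x - pi/4)"])
      show "DERIV sin (pi / 4) :> A0' (pi / 4)" using DERIV_sin[of "pi/4"] by (simp add: A0'_def)
      show "DERIV (\<lambda>x. sqrt 2 / 2 * exp (x - pi / 4)) (pi / 4) :> A0' (pi / 4)"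
        by (auto intro!: derivative_eq_intros simp: A0'_def cos_45)
      fix x :: real assume x: "pi/4 \<le> x"
      show "A0 x = sqrt 2 / 2 * exp (x - pi/4)"
      proof (cases "x = pi/4")
        case True show ?thesis unfolding True A0_def by (simp add: sin_45)
      next
        case False with x show ?thesis by (simp add: A0_def)
      qed
    qed (auto simp: A0_def)
  qed
qed

lemma A0'_deriv: "x \<noteq> pi/4 \<Longrightarrow> (A0' has_real_derivative (- Kpar (pi/4) x * A0 x)) (at x)"
proof -
  assume "x \<noteq> pi/4"
  then consider "x < pi/4" | "x > pi/4" by linarith
  then show ?thesis
  proof cases
    case 1
    have "(cos has_real_derivative - Kpar (pi/4) x * A0 x) (at x)"
      using DERIV_cos[of x] 1 by (simp add: A0_def Kpar_cases)
    then show ?thesis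
      by (rule has_field_derivative_transform_within_open[of _ _ _ "{..<pi/4}"])
         (use 1 in \<open>auto simp: A0_def A0'_def Kpar_cases\<close>)
  next
    case 2
    have "((\<lambda>x. sqrt 2 / 2 * exp (x - pi/4)) has_real_derivative - Kpar (pi/4) x * A0 x) (at x)"
      using 2 by (auto intro!: derivative_eq_intros simp: A0_def Kpar_cases)
    then show ?thesis
      by (rule has_field_derivative_transform_within_open[of _ _ _ "{pi/4<..}"])
         (use 2 in \<open>auto simp: A0_def A0'_def Kpar_cases\<close>)
  qed
qed

lemma A0'_cont: "continuous_on UNIV A0'"
proof -
  have "continuous_on ({..pi/4} \<union> {pi/4..}) (\<lambda>x. if x \<le> pi/4 then cos x else sqrt 2 / 2 * exp (x - pi/4))"
  proof (rule continuous_on_If)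
    fix x :: real assume "x \<in> {pi/4..}" "x \<le> pi/4"
    then have "x = pi/4" by auto
    show "cos x = sqrt 2 / 2 * exp (x - pi/4)" unfolding \<open>x = pi/4\<close> by (simp add: cos_45)
  qed (auto intro!: continuous_intros)
  moreover have "{..pi/4} \<union> {pi/4..} = (UNIV :: real set)" by auto
  ultimately show ?thesis unfolding A0'_def[abs_def] by simp
qed

lemma is_warp_A0: "is_warp (pi/4) A0"
  unfolding is_warp_def
  by (intro exI[of _ A0'] conjI allI impI A0'_cont A0_deriv A0'_deriv)
     (auto simp: A0_def A0'_def)

lemma warp_eq: "warp (pi/4) = A0"
  unfolding warp_def
proof (rule the_equality[of "is_warp (pi/4)" A0, OF is_warp_A0])
  fix f assume "is_warp (pi/4) f"
  then show "f = A0" by (intro warp_unique[OF _ _ is_warp_A0]) simp_all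
qed

lemma deriv_warp_eq: "deriv (warp (pi/4)) x = A0' x"
  unfolding warp_eq by (rule DERIV_imp_deriv[OF A0_deriv])



lemma ode_bound:
  fixes cq cP q1 P1 D V L M B :: real
  assumes L: "L \<ge> 0" and M: "M \<ge> 0"
    and lipx: "\<bar>cq - cP\<bar> \<le> L * \<bar>D\<bar>" and bP: "\<bar>cP\<bar> \<le> M"
    and bq: "\<bar>q1\<bar> \<le> B" and bP1: "\<bar>P1\<bar> \<le> B" and V: "V = q1 - P1"
  shows "\<bar>2 * D * V + 2 * V * (cq * (1 - q1\<^sup>2) - cP * (1 - P1\<^sup>2))\<bar>
        \<le> (1 + L * (1 + B\<^sup>2) + 4 * M * B) * (D\<^sup>2 + V\<^sup>2)"
proof -
  define X where "X = cq * (1 - q1\<^sup>2) - cP * (1 - P1\<^sup>2)"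
  have B0: "B \<ge> 0" using bq by linarith
  have Xeq: "X = (cq - cP) * (1 - q1\<^sup>2) + cP * (P1 - q1) * (P1 + q1)"
    unfolding X_def by (simp add: algebra_simps power2_eq_square)
  have q2: "q1\<^sup>2 \<le> B\<^sup>2" using power_mono[OF bq abs_ge_zero, of 2] by simp
  have t1: "\<bar>1 - q1\<^sup>2\<bar> \<le> 1 + B\<^sup>2" using q2 by (simp add: abs_le_iff)
  have t2: "\<bar>P1 + q1\<bar> \<le> 2 * B" using bq bP1 by linarith
  have "\<bar>(cq - cP) * (1 - q1\<^sup>2)\<bar> \<le> (L * \<bar>D\<bar>) * (1 + B\<^sup>2)"
    unfolding abs_mult by (rule mult_mono[OF lipx t1]) (use L in auto)
  moreover have "\<bar>cP * (P1 - q1) * (P1 + q1)\<bar> \<le> M * \<bar>V\<bar> * (2 * B)"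
    unfolding abs_mult using V
    by (intro mult_mono bP t2) (auto simp: abs_minus_commute M)
  ultimately have "\<bar>(cq - cP) * (1 - q1\<^sup>2)\<bar> + \<bar>cP * (P1 - q1) * (P1 + q1)\<bar>
      \<le> L * \<bar>D\<bar> * (1 + B\<^sup>2) + M * \<bar>V\<bar> * (2 * B)" by (rule add_mono)
  moreover have "\<bar>X\<bar> \<le> \<bar>(cq - cP) * (1 - q1\<^sup>2)\<bar> + \<bar>cP * (P1 - q1) * (P1 + q1)\<bar>"
    unfolding Xeq by (rule abs_triangle_ineq)
  moreover have "L * \<bar>D\<bar> * (1 + B\<^sup>2) + M * \<bar>V\<bar> * (2 * B) = L * (1 + B\<^sup>2) * \<bar>D\<bar> + 2 * M * B * \<bar>V\<bar>"
    by (simp add: algebra_simps)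
  ultimately have hX: "\<bar>X\<bar> \<le> L * (1 + B\<^sup>2) * \<bar>D\<bar> + 2 * M * B * \<bar>V\<bar>" by linarith
  have DV: "2 * \<bar>D\<bar> * \<bar>V\<bar> \<le> D\<^sup>2 + V\<^sup>2"
  proof -
    have "0 \<le> (\<bar>D\<bar> - \<bar>V\<bar>)\<^sup>2" by simp
    also have "\<dots> = D\<^sup>2 + V\<^sup>2 - 2 * \<bar>D\<bar> * \<bar>V\<bar>" by (simp add: power2_diff)
    finally show ?thesis by simp
  qed
  have "\<bar>2 * D * V + 2 * V * X\<bar> \<le> 2 * \<bar>D\<bar> * \<bar>V\<bar> + 2 * \<bar>V\<bar> * \<bar>X\<bar>"
    by (rule order_trans[OF abs_triangle_ineq]) (simp add: abs_mult)
  also have "\<dots> \<le> 2 * \<bar>D\<bar> * \<bar>V\<bar> + 2 * \<bar>V\<bar> * (L * (1 + B\<^sup>2) * \<bar>D\<bar> + 2 * M * B * \<bar>V\<bar>)"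
    using hX by (simp add: mult_left_mono)
  also have "\<dots> = (1 + L * (1 + B\<^sup>2)) * (2 * \<bar>D\<bar> * \<bar>V\<bar>) + 4 * M * B * V\<^sup>2"
    by (simp add: algebra_simps power2_eq_square)
  also have "\<dots> \<le> (1 + L * (1 + B\<^sup>2)) * (D\<^sup>2 + V\<^sup>2) + 4 * M * B * (D\<^sup>2 + V\<^sup>2)"
  proof (rule add_mono)
    show "(1 + L * (1 + B\<^sup>2)) * (2 * \<bar>D\<bar> * \<bar>V\<bar>) \<le> (1 + L * (1 + B\<^sup>2)) * (D\<^sup>2 + V\<^sup>2)"
      using DV L by (intro mult_left_mono) auto
    show "4 * M * B * V\<^sup>2 \<le> 4 * M * B * (D\<^sup>2 + V\<^sup>2)"
      using M B0 by (intro mult_left_mono) auto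
  qed
  also have "\<dots> = (1 + L * (1 + B\<^sup>2) + 4 * M * B) * (D\<^sup>2 + V\<^sup>2)"
    by (simp add: algebra_simps)
  finally show ?thesis unfolding X_def .
qed

lemma ode_unique:
  fixes c P P' q q' :: "real \<Rightarrow> real"
  assumes dP: "\<And>t. (P has_real_derivative P' t) (at t)"
    and dP': "\<And>t. (P' has_real_derivative c (P t) * (1 - (P' t)\<^sup>2)) (at t)"
    and dq: "\<And>t. (q has_real_derivative q' t) (at t)"
    and dq': "\<And>t. (q' has_real_derivative c (q t) * (1 - (q' t)\<^sup>2)) (at t)"
    and init: "q 0 = P 0" "q' 0 = P' 0"
    and pos: "\<And>t. P t > 0"
    and lip: "\<And>a. a > 0 \<Longrightarrow> \<exists>L M. L \<ge> 0 \<and> M \<ge> 0 \<and>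
               (\<forall>x y. x \<ge> a \<longrightarrow> y \<ge> a \<longrightarrow> \<bar>c x - c y\<bar> \<le> L * \<bar>x - y\<bar> \<and> \<bar>c x\<bar> \<le> M)"
  shows "q = P"
proof -
  have cont: "continuous_on UNIV f" if "\<And>t. \<exists>d. (f has_real_derivative d) (at t)" for f :: "real \<Rightarrow> real"
    using that by (meson DERIV_isCont continuous_at_imp_continuous_on)
  have cP: "continuous_on UNIV P" by (rule cont) (use dP in blast)
  have cP': "continuous_on UNIV P'" by (rule cont) (use dP' in blast)
  have cq: "continuous_on UNIV q" by (rule cont) (use dq in blast)
  have cq': "continuous_on UNIV q'" by (rule cont) (use dq' in blast)
  define S where "S = {t. q t = P t} \<inter> {t. q' t = P' t}"
  define E where "E x = (q x - P x)\<^sup>2 + (q' x - P' x)\<^sup>2" for x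
  define E' where "E' x = 2 * (q x - P x) * (q' x - P' x) +
      2 * (q' x - P' x) * (c (q x) * (1 - (q' x)\<^sup>2) - c (P x) * (1 - (P' x)\<^sup>2))" for x
  have dE: "(E has_real_derivative E' x) (at x)" for x
    unfolding E_def E'_def
    by (auto intro!: derivative_eq_intros dP dP' dq dq' simp: algebra_simps)
  have cE: "continuous_on T E" for T
    using dE by (meson DERIV_isCont continuous_at_imp_continuous_on)
  have nnE: "E x \<ge> 0" for x unfolding E_def by simp
  have SE: "x \<in> S \<longleftrightarrow> E x = 0" for x
    unfolding S_def E_def by (simp add: sum_power2_eq_zero_iff)
  have "closed S" unfolding S_def
    by (intro closed_Int closed_Collect_eq cP cP' cq cq')
  moreover have "open S"
  proof (rule openI)
    fix t0 assume "t0 \<in> S"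
    then have E0: "E t0 = 0" using SE by simp
    define a where "a = P t0 / 2"
    have a: "a > 0" using pos[of t0] by (simp add: a_def)
    obtain L M where LM: "L \<ge> 0" "M \<ge> 0"
      "\<And>x y. x \<ge> a \<Longrightarrow> y \<ge> a \<Longrightarrow> \<bar>c x - c y\<bar> \<le> L * \<bar>x - y\<bar> \<and> \<bar>c x\<bar> \<le> M"
      using lip[OF a] by blast
    define B where "B = \<bar>P' t0\<bar> + 1"
    define U where "U = {t. a < q t} \<inter> {t. a < P t} \<inter> {t. \<bar>q' t\<bar> < B} \<inter> {t. \<bar>P' t\<bar> < B}"
    have "open U" unfolding U_def
      by (intro open_Int open_Collect_less continuous_intros cP cP' cq cq')
    moreover have "t0 \<in> U" using \<open>t0 \<in> S\<close> pos[of t0] unfolding U_def S_def a_def B_def by auto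
    ultimately obtain e where e: "e > 0" "ball t0 e \<subseteq> U" by (meson openE)
    define C where "C = 1 + L * (1 + B\<^sup>2) + 4 * M * B"
    have bnd: "\<bar>E' x\<bar> \<le> C * E x" if "x \<in> U" for x
    proof -
      from that have x: "a < q x" "a < P x" "\<bar>q' x\<bar> < B" "\<bar>P' x\<bar> < B" unfolding U_def by auto
      have l1: "\<bar>c (q x) - c (P x)\<bar> \<le> L * \<bar>q x - P x\<bar>" using LM(3)[of "q x" "P x"] x by simp
      have l2: "\<bar>c (P x)\<bar> \<le> M" using LM(3)[of "P x" "P x"] x by simp
      have l3: "\<bar>q' x\<bar> \<le> B" "\<bar>P' x\<bar> \<le> B" using x by simp_all
      show ?thesis unfolding E'_def E_def C_def
        by (rule ode_bound[OF LM(1,2) l1 l2 l3 refl])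
    qed
    have "ball t0 e \<subseteq> S"
    proof
      fix t assume t: "t \<in> ball t0 e"
      have inU: "x \<in> U" if "min t0 t \<le> x" "x \<le> max t0 t" for x
        using e(2) t that by (auto simp: dist_real_def)
      have "E t = 0"
      proof (cases "t0 \<le> t")
        case True
        show ?thesis
        proof (rule gronwall_fwd[of t0 t E E' C])
          fix x assume "t0 < x" "x < t"
          then show "E' x \<le> C * E x" using bnd[OF inU, of x] True by (simp add: abs_le_iff)
        qed (use True dE cE nnE E0 in auto)
      next
        case False
        show ?thesis
        proof (rule gronwall_bwd[of t t0 E E' C])
          fix x assume "t < x" "x < t0"
          then show "- C * E x \<le> E' x" using bnd[OF inU, of x] False by (simp add: abs_le_iff)
        qed (use False dE cE nnE E0 in auto)
      qed
      then show "t \<in> S" using SE by simp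
    qed
    then show "\<exists>e>0. ball t0 e \<subseteq> S" using e(1) by blast
  qed
  moreover have "0 \<in> S" unfolding S_def using init by simp
  ultimately have "S = UNIV" using clopen[of S] by blast
  then show ?thesis unfolding S_def by auto
qed



definition Sf :: "real \<Rightarrow> real \<Rightarrow> real" where
  "Sf s = (\<lambda>t. sqrt (1 - (cos s * cos t)\<^sup>2))"
definition Pin :: "real \<Rightarrow> real \<Rightarrow> real" where
  "Pin s = (\<lambda>t. arccos (cos s * cos t))"
definition Pin' :: "real \<Rightarrow> real \<Rightarrow> real" where
  "Pin' s = (\<lambda>t. cos s * sin t / Sf s t)"
definition Fd :: "real \<Rightarrow> real \<Rightarrow> real" where
  "Fd s = (\<lambda>t. sinh (t - ell s) + sqrt (cos (2 * s)) * cosh (t - ell s))"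
definition Pout :: "real \<Rightarrow> real \<Rightarrow> real" where
  "Pout s = (\<lambda>t. pi/4 + ln (Ffun t s))"
definition Pout' :: "real \<Rightarrow> real \<Rightarrow> real" where
  "Pout' s = (\<lambda>t. Fd s t / Ffun t s)"

locale geo =
  fixes s :: real
  assumes s0: "0 < s" and s1: "s < pi/4"
begin

lemma c0_gt: "sqrt 2 / 2 < cos s"
  using cos_monotone_0_pi[of s "pi/4"] s0 s1 by (simp add: cos_45)

lemma c0_lt1: "cos s < 1"
  using cos_monotone_0_pi[of 0 s] s0 s1 by simp

lemma c0_pos: "cos s > 0"
proof -
  have "0 < sqrt 2 / 2" by simp
  then show ?thesis using c0_gt by linarith
qed

definition "q0 = sqrt 2 / 2 / cos s"

lemma q0_pos: "q0 > 0" unfolding q0_def using c0_pos by simp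
lemma q0_lt1: "q0 < 1" unfolding q0_def using c0_pos c0_gt by simp
lemma c0q0: "cos s * q0 = sqrt 2 / 2" unfolding q0_def using c0_pos by simp

lemma ell_eq: "ell s = arccos q0" unfolding ell_def q0_def cos_45 ..

lemma cos_ell: "cos (ell s) = q0"
  unfolding ell_eq using q0_pos q0_lt1 by simp

lemma ell_bounds: "0 < ell s" "ell s < pi"
  unfolding ell_eq using arccos_lt_bounded[of q0] q0_pos q0_lt1 by auto

lemma cos2: "cos (2 * s) = 2 * (cos s)\<^sup>2 - 1" by (rule cos_double_cos)

lemma cos2_pos: "cos (2 * s) > 0"
proof -
  have "(sqrt 2 / 2)\<^sup>2 < (cos s)\<^sup>2" using c0_gt by (intro power_strict_mono) auto
  then show ?thesis unfolding cos2 by (simp add: power_divide)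
qed

definition "k = sqrt (cos (2 * s))"

lemma k_pos: "k > 0" unfolding k_def using cos2_pos by simp
lemma k_sq: "k\<^sup>2 = cos (2 * s)" unfolding k_def using cos2_pos by simp
lemma k_sq': "1 - k\<^sup>2 = 2 * (sin s)\<^sup>2" unfolding k_sq by (simp add: cos_double_sin)

lemma abs_c0cos: "\<bar>cos s * cos t\<bar> < 1"
proof -
  have "\<bar>cos s * cos t\<bar> \<le> cos s" using c0_pos by (simp add: abs_mult mult_left_le)
  then show ?thesis using c0_lt1 by simp
qed

lemma Sf_pos: "Sf s t > 0"
proof -
  have "(cos s * cos t)\<^sup>2 < 1" using abs_c0cos[of t] by (simp add: abs_square_less_1)
  then show ?thesis unfolding Sf_def by simp
qed

lemma cos_Pin: "cos (Pin s t) = cos s * cos t"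
  unfolding Pin_def using abs_c0cos[of t] by (simp add: abs_le_iff)

lemma sin_Pin: "sin (Pin s t) = Sf s t"
  unfolding Pin_def Sf_def using abs_c0cos[of t] by (intro sin_arccos) (simp_all add: abs_le_iff)

lemma Pin_pos: "Pin s t > 0"
  unfolding Pin_def using abs_c0cos[of t] arccos_lt_bounded[of "cos s * cos t"] by (simp add: abs_less_iff)

lemma Pin0: "Pin s 0 = s"
  unfolding Pin_def using s0 s1 by (simp add: arccos_cos)

lemma arccos45: "arccos (sqrt 2 / 2) = pi / 4"
proof -
  have "arccos (cos (pi/4)) = pi/4" by (rule arccos_cos) auto
  then show ?thesis unfolding cos_45 .
qed

lemma Pin_le: assumes "\<bar>t\<bar> \<le> ell s" shows "Pin s t \<le> pi/4"
proof -
  have "cos (ell s) \<le> cos \<bar>t\<bar>" using assms ell_bounds by (intro cos_monotone_0_pi_le) auto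
  then have "q0 \<le> cos t" using cos_ell by (simp add: abs_real_def split: if_splits)
  then have "sqrt 2 / 2 \<le> cos s * cos t" using c0q0 c0_pos by (metis mult_left_mono less_imp_le)
  note h = this
  have "0 \<le> sqrt 2 / 2" by simp
  then have m1: "-1 \<le> sqrt 2 / 2" by linarith
  have m3: "cos s * cos t \<le> 1" using abs_c0cos[of t] by (simp add: abs_less_iff)
  have "arccos (cos s * cos t) \<le> arccos (sqrt 2 / 2)"
    by (rule arccos_le_arccos[OF m1 h m3])
  then show ?thesis unfolding Pin_def arccos45 by simp
qed

lemma Pin_ell: "Pin s (ell s) = pi/4" "Pin s (- ell s) = pi/4"
  unfolding Pin_def by (simp_all only: cos_ell cos_minus c0q0 arccos45)

lemma Sf_ell: "Sf s (ell s) = sqrt 2 / 2" "Sf s (- ell s) = sqrt 2 / 2"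
  using sin_Pin[of "ell s"] sin_Pin[of "- ell s"] Pin_ell by (simp_all add: sin_45)

lemma sin_ell: "sin (ell s) = sqrt (1 - q0\<^sup>2)"
  unfolding ell_eq using q0_pos q0_lt1 by (intro sin_arccos) auto

lemma Pin'_ell: "Pin' s (ell s) = k" "Pin' s (- ell s) = - k"
proof -
  have sn: "sin (ell s) \<ge> 0" using ell_bounds by (intro sin_ge_zero) auto
  have sq: "(sin (ell s))\<^sup>2 = 1 - q0\<^sup>2"
    using sin_cos_squared_add[of "ell s"] unfolding cos_ell by linarith
  have h2: "(cos s * q0)\<^sup>2 = 1/2" unfolding c0q0 by (simp add: power_divide)
  have "(cos s * sin (ell s))\<^sup>2 = (cos s)\<^sup>2 * (sin (ell s))\<^sup>2" by (rule power_mult_distrib)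
  also have "\<dots> = (cos s)\<^sup>2 - (cos s * q0)\<^sup>2" unfolding sq power_mult_distrib by (simp add: algebra_simps)
  finally have A: "(cos s * sin (ell s))\<^sup>2 = (cos s)\<^sup>2 - 1/2" unfolding h2 .
  have X: "Pin' s (ell s) * Sf s (ell s) = cos s * sin (ell s)"
    using Sf_pos[of "ell s"] by (simp add: Pin'_def)
  have "(Pin' s (ell s))\<^sup>2 * (Sf s (ell s))\<^sup>2 = (cos s)\<^sup>2 - 1/2"
    unfolding power_mult_distrib[symmetric] X A ..
  moreover have "(Sf s (ell s))\<^sup>2 = 1/2" unfolding Sf_ell by (simp add: power_divide)
  ultimately have "(Pin' s (ell s))\<^sup>2 = 2 * (cos s)\<^sup>2 - 1" by simp
  then have "(Pin' s (ell s))\<^sup>2 = k\<^sup>2" unfolding k_sq cos2 .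
  moreover have "Pin' s (ell s) \<ge> 0" unfolding Pin'_def using sn c0_pos Sf_pos[of "ell s"] by simp
  moreover have "k \<ge> 0" using k_pos by simp
  ultimately show "Pin' s (ell s) = k" by (rule power2_eq_imp_eq)
  then show "Pin' s (- ell s) = - k" unfolding Pin'_def Sf_def by simp
qed

lemma ratio_ell: "cos s * cos (ell s) / Sf s (ell s) = 1"
  unfolding cos_ell c0q0 Sf_ell by simp

lemma D_Sf: "DERIV (Sf s) t :> (cos s)\<^sup>2 * cos t * sin t / Sf s t"
proof -
  have g: "DERIV (\<lambda>t. 1 - (cos s * cos t)\<^sup>2) t :> 2 * (cos s)\<^sup>2 * cos t * sin t"
    by (auto intro!: derivative_eq_intros simp: power2_eq_square)
  have p: "0 < 1 - (cos s * cos t)\<^sup>2" using Sf_pos[of t] unfolding Sf_def by simp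
  show ?thesis
    unfolding Sf_def
    by (rule DERIV_cong[OF DERIV_chain2[OF DERIV_real_sqrt[OF p] g]]) (simp add: field_simps)
qed

lemma D_Pin: "DERIV (Pin s) t :> Pin' s t"
proof -
  have g: "DERIV (\<lambda>t. cos s * cos t) t :> - (cos s * sin t)"
    by (auto intro!: derivative_eq_intros)
  have p: "- 1 < cos s * cos t" "cos s * cos t < 1" using abs_c0cos[of t] by (auto simp: abs_less_iff)
  show ?thesis
    unfolding Pin_def
    by (rule DERIV_cong[OF DERIV_chain2[OF DERIV_arccos[OF p] g]])
       (simp add: Pin'_def Sf_def field_simps)
qed

lemma D_Pin': "DERIV (Pin' s) t :> cos s * cos t / Sf s t * (1 - (Pin' s t)\<^sup>2)"
proof -
  have f: "DERIV (\<lambda>t. cos s * sin t) t :> cos s * cos t"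
    by (auto intro!: derivative_eq_intros)
  have ne: "Sf s t \<noteq> 0" using Sf_pos[of t] by simp
  have e: "Pin' s = (\<lambda>t. cos s * sin t / Sf s t)" unfolding Pin'_def ..
  show ?thesis unfolding e
    by (rule DERIV_cong[OF DERIV_divide[OF f D_Sf ne]])
       (use ne in \<open>simp add: field_simps power2_eq_square\<close>)
qed

end


definition PP :: "real \<Rightarrow> real \<Rightarrow> real" where
  "PP s = (\<lambda>t. if \<bar>t\<bar> \<le> ell s then Pin s t else Pout s \<bar>t\<bar>)"
definition PP' :: "real \<Rightarrow> real \<Rightarrow> real" where
  "PP' s = (\<lambda>t. if \<bar>t\<bar> \<le> ell s then Pin' s t else if t > 0 then Pout' s t else - Pout' s (- t))"
definition QQ :: "real \<Rightarrow> real \<Rightarrow> real" where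
  "QQ s = (\<lambda>t. (if \<bar>t\<bar> \<le> ell s then cos s * cos t / Sf s t else 1) * (1 - (PP' s t)\<^sup>2))"

context geo begin

lemma F_eq: "Ffun t s = cosh (t - ell s) + k * sinh (t - ell s)"
  unfolding Ffun_def k_def ..

lemma Fd_eq: "Fd s t = sinh (t - ell s) + k * cosh (t - ell s)"
  unfolding Fd_def k_def ..

lemma F_ge1: "t \<ge> ell s \<Longrightarrow> Ffun t s \<ge> 1"
  unfolding F_eq using cosh_real_ge_1[of "t - ell s"] k_pos
  by (simp add: add_increasing2)

lemma F_gt1: "t > ell s \<Longrightarrow> Ffun t s > 1"
proof -
  assume "t > ell s"
  then have "k * sinh (t - ell s) > 0" using k_pos by simp
  then show ?thesis unfolding F_eq using cosh_real_ge_1[of "t - ell s"] by linarith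
qed

lemma F_ell: "Ffun (ell s) s = 1" unfolding F_eq by simp
lemma Fd_ell: "Fd s (ell s) = k" unfolding Fd_eq by simp

lemma FF: "(Ffun t s)\<^sup>2 - (Fd s t)\<^sup>2 = 2 * (sin s)\<^sup>2"
proof -
  have "(Ffun t s)\<^sup>2 - (Fd s t)\<^sup>2 = ((cosh (t - ell s))\<^sup>2 - (sinh (t - ell s))\<^sup>2) * (1 - k\<^sup>2)"
    unfolding F_eq Fd_eq by (simp add: algebra_simps power2_eq_square)
  also have "\<dots> = 1 - k\<^sup>2" using cosh_square_eq[of "t - ell s"] by simp
  finally show ?thesis unfolding k_sq' .
qed

lemma D_F: "DERIV (\<lambda>t. Ffun t s) t :> Fd s t"
  unfolding F_eq Fd_eq by (auto intro!: derivative_eq_intros)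

lemma D_Fd: "DERIV (Fd s) t :> Ffun t s"
proof -
  have e: "Fd s = (\<lambda>t. sinh (t - ell s) + k * cosh (t - ell s))" using Fd_eq by blast
  show ?thesis unfolding e F_eq by (auto intro!: derivative_eq_intros)
qed

lemma D_Pout: "t \<ge> ell s \<Longrightarrow> DERIV (Pout s) t :> Pout' s t"
proof -
  assume t: "t \<ge> ell s"
  have p: "Ffun t s > 0" using F_ge1[OF t] by simp
  have e: "Pout s = (\<lambda>t. pi/4 + ln (Ffun t s))" unfolding Pout_def ..
  show ?thesis unfolding e
    by (rule DERIV_cong[OF DERIV_add[OF DERIV_const DERIV_chain2[OF DERIV_ln[OF p] D_F]]])
       (simp add: Pout'_def divide_inverse mult.commute)
qed

lemma D_Pout': "t \<ge> ell s \<Longrightarrow> DERIV (Pout' s) t :> 1 - (Pout' s t)\<^sup>2"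
proof -
  assume t: "t \<ge> ell s"
  have ne: "Ffun t s \<noteq> 0" using F_ge1[OF t] by simp
  have e: "Pout' s = (\<lambda>t. Fd s t / Ffun t s)" unfolding Pout'_def ..
  show ?thesis unfolding e
    by (rule DERIV_cong[OF DERIV_divide[OF D_Fd D_F ne]])
       (use ne in \<open>simp add: field_simps power2_eq_square\<close>)
qed

lemma Pout_ell: "Pout s (ell s) = pi/4" unfolding Pout_def F_ell by simp
lemma Pout'_ell: "Pout' s (ell s) = k" unfolding Pout'_def F_ell Fd_ell by simp

lemma Pout_gt: "t > ell s \<Longrightarrow> Pout s t > pi/4"
proof -
  assume "t > ell s"
  then have "Ffun t s > 1" by (rule F_gt1)
  then show ?thesis unfolding Pout_def by simp
qed

end


context geo begin

lemma ratio_mell: "cos s * cos (- ell s) / Sf s (- ell s) = 1"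
  unfolding cos_minus Sf_ell(2) Sf_ell(1)[symmetric] by (rule ratio_ell)

lemma PP_in: "\<bar>t\<bar> \<le> ell s \<Longrightarrow> PP s t = Pin s t" unfolding PP_def by simp
lemma PP_out: "\<bar>t\<bar> > ell s \<Longrightarrow> PP s t = Pout s \<bar>t\<bar>" unfolding PP_def by simp
lemma PP'_in: "\<bar>t\<bar> \<le> ell s \<Longrightarrow> PP' s t = Pin' s t" unfolding PP'_def by simp
lemma PP'_pos: "t > ell s \<Longrightarrow> PP' s t = Pout' s t" unfolding PP'_def using ell_bounds by simp
lemma PP'_neg: "t < - ell s \<Longrightarrow> PP' s t = - Pout' s (- t)" unfolding PP'_def using ell_bounds by simp

lemma D_PP: "DERIV (PP s) t :> PP' s t"
proof -
  have l: "0 < ell s" using ell_bounds by simp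
  consider "\<bar>t\<bar> < ell s" | "t > ell s" | "t < - ell s" | "t = ell s" | "t = - ell s" by linarith
  then show ?thesis
  proof cases
    case 1
    have "DERIV (PP s) t :> Pin' s t"
      by (rule has_field_derivative_transform_within_open[OF D_Pin, where S="{-ell s<..<ell s}"])
         (use 1 in \<open>auto simp: PP_in\<close>)
    then show ?thesis using 1 by (simp add: PP'_in)
  next
    case 2
    have "DERIV (PP s) t :> Pout' s t"
      by (rule has_field_derivative_transform_within_open[OF D_Pout, where S="{ell s<..}"])
         (use 2 l in \<open>auto simp: PP_out\<close>)
    then show ?thesis using 2 by (simp add: PP'_pos)
  next
    case 3
    have "DERIV (Pout s) (- t) :> Pout' s (- t)" using 3 by (intro D_Pout) simp
    then have "DERIV (\<lambda>x. Pout s (- x)) t :> - Pout' s (- t)"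
      using DERIV_mirror[where f="Pout s" and x=t] by simp
    then have "DERIV (PP s) t :> - Pout' s (- t)"
      by (rule has_field_derivative_transform_within_open[where S="{..<- ell s}"])
         (use 3 l in \<open>auto simp: PP_out\<close>)
    then show ?thesis using 3 by (simp add: PP'_neg)
  next
    case 4
    show ?thesis unfolding 4
    proof (rule DERIV_glue[OF l, of _ "PP s" "Pin s" "Pout s"])
      fix x assume "ell s - ell s < x" "x \<le> ell s"
      then show "PP s x = Pin s x" by (simp add: PP_in)
    next
      fix x assume x: "ell s \<le> x" "x < ell s + ell s"
      show "PP s x = Pout s x"
      proof (cases "x = ell s")
        case True then show ?thesis using PP_in[of x] Pin_ell Pout_ell l by simp
      next
        case False then show ?thesis using x l PP_out[of x] by simp
      qed
    next
      show "DERIV (Pin s) (ell s) :> PP' s (ell s)" using D_Pin PP'_in[of "ell s"] l by simp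
      show "DERIV (Pout s) (ell s) :> PP' s (ell s)"
        using D_Pout[of "ell s"] PP'_in[of "ell s"] Pin'_ell Pout'_ell l by simp
    qed
  next
    case 5
    have dm: "DERIV (\<lambda>x. Pout s (- x)) (- ell s) :> - Pout' s (ell s)"
      using DERIV_mirror[where f="Pout s" and x="- ell s"] D_Pout[of "ell s"] by simp
    show ?thesis unfolding 5
    proof (rule DERIV_glue[OF l, of _ "PP s" "\<lambda>x. Pout s (- x)" "Pin s"])
      fix x assume x: "- ell s - ell s < x" "x \<le> - ell s"
      show "PP s x = Pout s (- x)"
      proof (cases "x = - ell s")
        case True then show ?thesis using PP_in[of x] Pin_ell Pout_ell l by simp
      next
        case False then show ?thesis using x l PP_out[of x] by simp
      qed
    next
      fix x assume "- ell s \<le> x" "x < - ell s + ell s"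
      then show "PP s x = Pin s x" by (simp add: PP_in)
    next
      show "DERIV (Pin s) (- ell s) :> PP' s (- ell s)" using D_Pin PP'_in[of "- ell s"] l by simp
      show "DERIV (\<lambda>x. Pout s (- x)) (- ell s) :> PP' s (- ell s)"
        using dm PP'_in[of "- ell s"] Pin'_ell Pout'_ell l by simp
    qed
  qed
qed

lemma D_PP': "DERIV (PP' s) t :> QQ s t"
proof -
  have l: "0 < ell s" using ell_bounds by simp
  consider "\<bar>t\<bar> < ell s" | "t > ell s" | "t < - ell s" | "t = ell s" | "t = - ell s" by linarith
  then show ?thesis
  proof cases
    case 1
    have "DERIV (PP' s) t :> cos s * cos t / Sf s t * (1 - (Pin' s t)\<^sup>2)"
      by (rule has_field_derivative_transform_within_open[OF D_Pin', where S="{-ell s<..<ell s}"])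
         (use 1 in \<open>auto simp: PP'_in\<close>)
    then show ?thesis using 1 by (simp add: QQ_def PP'_in)
  next
    case 2
    have "DERIV (PP' s) t :> 1 - (Pout' s t)\<^sup>2"
      by (rule has_field_derivative_transform_within_open[OF D_Pout', where S="{ell s<..}"])
         (use 2 l in \<open>auto simp: PP'_pos\<close>)
    moreover have "\<not> \<bar>t\<bar> \<le> ell s" using 2 by simp
    ultimately show ?thesis using 2 by (simp add: QQ_def PP'_pos)
  next
    case 3
    have "DERIV (Pout' s) (- t) :> 1 - (Pout' s (- t))\<^sup>2" using 3 by (intro D_Pout') simp
    then have "DERIV (\<lambda>x. Pout' s (- x)) t :> - (1 - (Pout' s (- t))\<^sup>2)"
      using DERIV_mirror[where f="Pout' s" and x=t] by simp
    then have "DERIV (\<lambda>x. - Pout' s (- x)) t :> 1 - (Pout' s (- t))\<^sup>2"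
      using DERIV_minus by fastforce
    then have "DERIV (PP' s) t :> 1 - (Pout' s (- t))\<^sup>2"
      by (rule has_field_derivative_transform_within_open[where S="{..<- ell s}"])
         (use 3 l in \<open>auto simp: PP'_neg\<close>)
    moreover have "\<not> \<bar>t\<bar> \<le> ell s" using 3 by simp
    ultimately show ?thesis using 3 by (simp add: QQ_def PP'_neg)
  next
    case 4
    have a: "\<bar>ell s\<bar> \<le> ell s" using l by simp
    have "QQ s (ell s) = (cos s * cos (ell s) / Sf s (ell s)) * (1 - (PP' s (ell s))\<^sup>2)"
      using a by (simp only: QQ_def if_True)
    then have Q: "QQ s (ell s) = 1 - k\<^sup>2" unfolding ratio_ell PP'_in[OF a] Pin'_ell by simp
    show ?thesis unfolding 4
    proof (rule DERIV_glue[OF l, of _ "PP' s" "Pin' s" "Pout' s"])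
      fix x assume "ell s - ell s < x" "x \<le> ell s"
      then show "PP' s x = Pin' s x" by (simp add: PP'_in)
    next
      fix x assume x: "ell s \<le> x" "x < ell s + ell s"
      show "PP' s x = Pout' s x"
      proof (cases "x = ell s")
        case True then show ?thesis using PP'_in[of x] Pin'_ell Pout'_ell l by simp
      next
        case False then show ?thesis using x l PP'_pos[of x] by simp
      qed
    next
      show "DERIV (Pin' s) (ell s) :> QQ s (ell s)"
        using D_Pin'[of "ell s"] Q ratio_ell Pin'_ell by simp
      show "DERIV (Pout' s) (ell s) :> QQ s (ell s)"
        using D_Pout'[of "ell s"] Q Pout'_ell by simp
    qed
  next
    case 5
    have a: "\<bar>- ell s\<bar> \<le> ell s" using l by simp
    have "QQ s (- ell s) = (cos s * cos (- ell s) / Sf s (- ell s)) * (1 - (PP' s (- ell s))\<^sup>2)"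
      using a by (simp only: QQ_def if_True)
    then have Q: "QQ s (- ell s) = 1 - k\<^sup>2" unfolding ratio_mell PP'_in[OF a] Pin'_ell by simp
    have "DERIV (\<lambda>x. Pout' s (- x)) (- ell s) :> - (1 - (Pout' s (ell s))\<^sup>2)"
      using DERIV_mirror[where f="Pout' s" and x="- ell s"] D_Pout'[of "ell s"] by simp
    then have dm: "DERIV (\<lambda>x. - Pout' s (- x)) (- ell s) :> 1 - k\<^sup>2"
      using DERIV_minus Pout'_ell by fastforce
    show ?thesis unfolding 5
    proof (rule DERIV_glue[OF l, of _ "PP' s" "\<lambda>x. - Pout' s (- x)" "Pin' s"])
      fix x assume x: "- ell s - ell s < x" "x \<le> - ell s"
      show "PP' s x = - Pout' s (- x)"
      proof (cases "x = - ell s")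
        case True then show ?thesis using PP'_in[of x] Pin'_ell Pout'_ell l by simp
      next
        case False then show ?thesis using x l PP'_neg[of x] by simp
      qed
    next
      fix x assume "- ell s \<le> x" "x < - ell s + ell s"
      then show "PP' s x = Pin' s x" by (simp add: PP'_in)
    next
      show "DERIV (Pin' s) (- ell s) :> QQ s (- ell s)"
      proof -
        have "DERIV (Pin' s) (- ell s) :> 1 * (1 - (- k)\<^sup>2)"
          using D_Pin'[of "- ell s"] unfolding ratio_mell Pin'_ell(2) .
        then show ?thesis using Q by simp
      qed
      show "DERIV (\<lambda>x. - Pout' s (- x)) (- ell s) :> QQ s (- ell s)"
        using dm Q by simp
    qed
  qed
qed

end


lemma cot_lip:
  assumes a: "0 < a" and u: "a \<le> u" "u \<le> pi/4" and v: "a \<le> v" "v \<le> pi/4"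
  shows "\<bar>cos u / sin u - cos v / sin v\<bar> \<le> \<bar>u - v\<bar> / (sin a)\<^sup>2"
proof -
  have sa: "sin a > 0" using a u by (intro sin_gt_zero) (auto simp: pi_gt_zero)
  have su: "sin a \<le> sin u" using a u by (intro sin_monotone_2pi_le) auto
  have sv: "sin a \<le> sin v" using a v by (intro sin_monotone_2pi_le) auto
  have "cos u / sin u - cos v / sin v = sin (v - u) / (sin u * sin v)"
    using sa su sv by (simp add: sin_diff field_simps)
  then have "\<bar>cos u / sin u - cos v / sin v\<bar> = \<bar>sin (v - u)\<bar> / (sin u * sin v)"
    using sa su sv by (simp add: abs_mult)
  also have "\<dots> \<le> \<bar>u - v\<bar> / (sin a * sin a)"
  proof (rule frac_le)
    show "\<bar>sin (v - u)\<bar> \<le> \<bar>u - v\<bar>" using abs_sin_x_le_abs_x[of "v - u"] by simp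
    show "0 < sin a * sin a" using sa by simp
    show "sin a * sin a \<le> sin u * sin v" using sa su sv by (intro mult_mono) auto
  qed simp
  finally show ?thesis by (simp add: power2_eq_square)
qed

lemma cot_bound:
  assumes a: "0 < a" and u: "a \<le> u" "u \<le> pi/4"
  shows "\<bar>cos u / sin u\<bar> \<le> 1 / sin a"
proof -
  have sa: "sin a > 0" using a u by (intro sin_gt_zero) (auto simp: pi_gt_zero)
  have su: "sin a \<le> sin u" using a u by (intro sin_monotone_2pi_le) auto
  have c: "0 \<le> cos u" using a u by (intro cos_ge_zero) auto
  have "\<bar>cos u / sin u\<bar> = cos u / sin u" using c sa su by simp
  also have "\<dots> \<le> 1 / sin u" using sa su by (intro divide_right_mono) auto
  also have "\<dots> \<le> 1 / sin a" using sa su by (intro divide_left_mono) auto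
  finally show ?thesis .
qed

lemma deriv_A0: "deriv A0 x = A0' x" by (rule DERIV_imp_deriv[OF A0_deriv])

definition cfun :: "real \<Rightarrow> real" where
  "cfun \<rho> = deriv (warp (pi/4)) \<rho> / warp (pi/4) \<rho>"

lemma cfun_eq: "x > 0 \<Longrightarrow> cfun x = cos (min x (pi/4)) / sin (min x (pi/4))"
  unfolding cfun_def warp_eq deriv_A0
  by (auto simp: A0_def A0'_def min_def sin_45 cos_45)

lemma cfun_lip:
  assumes a: "a > 0"
  shows "\<exists>L M. L \<ge> 0 \<and> M \<ge> 0 \<and>
     (\<forall>x y. x \<ge> a \<longrightarrow> y \<ge> a \<longrightarrow> \<bar>cfun x - cfun y\<bar> \<le> L * \<bar>x - y\<bar> \<and> \<bar>cfun x\<bar> \<le> M)"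
proof -
  define b where "b = min a (pi/4)"
  have b: "0 < b" "b \<le> pi/4" "b \<le> a" using a by (auto simp: b_def)
  have sb: "sin b > 0" using b by (intro sin_gt_zero) (auto simp: pi_gt_zero)
  show ?thesis
  proof (intro exI conjI allI impI)
    show "0 \<le> 1 / (sin b)\<^sup>2" by simp
    show "0 \<le> 1 / sin b" using sb by simp
    fix x y assume x: "a \<le> x" and y: "a \<le> y"
    have mx: "b \<le> min x (pi/4)" "min x (pi/4) \<le> pi/4" using b x by auto
    have my: "b \<le> min y (pi/4)" "min y (pi/4) \<le> pi/4" using b y by auto
    have "\<bar>cfun x - cfun y\<bar> \<le> \<bar>min x (pi/4) - min y (pi/4)\<bar> / (sin b)\<^sup>2"
      using cfun_eq[of x] cfun_eq[of y] x y b cot_lip[OF b(1) mx my] by simp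
    also have "\<dots> \<le> \<bar>x - y\<bar> / (sin b)\<^sup>2"
      by (intro divide_right_mono) (auto simp: min_def)
    finally show "\<bar>cfun x - cfun y\<bar> \<le> 1 / (sin b)\<^sup>2 * \<bar>x - y\<bar>" by simp
    show "\<bar>cfun x\<bar> \<le> 1 / sin b"
      using cfun_eq[of x] x b cot_bound[OF b(1) mx] by simp
  qed
qed

context geo begin

lemma QQ_eq: "QQ s t = cfun (PP s t) * (1 - (PP' s t)\<^sup>2)"
proof (cases "\<bar>t\<bar> \<le> ell s")
  case True
  have p: "PP s t = Pin s t" "Pin s t \<le> pi/4" "Pin s t > 0"
    using True PP_in Pin_le Pin_pos by auto
  have "cfun (PP s t) = cos s * cos t / Sf s t"
    unfolding p(1) using cfun_eq[OF p(3)] p(2) by (simp add: min_def cos_Pin sin_Pin)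
  then show ?thesis using True by (simp add: QQ_def)
next
  case False
  have p: "PP s t = Pout s \<bar>t\<bar>" "Pout s \<bar>t\<bar> > pi/4"
    using False PP_out Pout_gt by auto
  have "cfun (PP s t) = 1"
    using cfun_eq[of "PP s t"] p pi_gt_zero by (simp add: min_def sin_45 cos_45)
  then show ?thesis using False by (simp add: QQ_def)
qed

lemma PP_pos: "PP s t > 0"
proof (cases "\<bar>t\<bar> \<le> ell s")
  case True then show ?thesis using PP_in Pin_pos by simp
next
  case False
  then have "PP s t = Pout s \<bar>t\<bar>" "Pout s \<bar>t\<bar> > pi/4" using PP_out Pout_gt[of "\<bar>t\<bar>"] by auto
  moreover have "pi/4 > 0" by simp
  ultimately show ?thesis by linarith
qed

lemma is_geod_PP: "is_geod_radius (pi/4) s (PP s)"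
  unfolding is_geod_radius_def
proof (intro exI[of _ "PP' s"] conjI allI)
  show "DERIV (PP s) t :> PP' s t" for t by (rule D_PP)
  show "DERIV (PP' s) t :> deriv (warp (pi / 4)) (PP s t) / warp (pi / 4) (PP s t) * (1 - (PP' s t)\<^sup>2)" for t
    using D_PP'[of t] unfolding QQ_eq cfun_def .
  have z: "\<bar>0::real\<bar> \<le> ell s" using ell_bounds by simp
  show "PP s 0 = s" using PP_in[OF z] Pin0 by simp
  show "PP' s 0 = 0" using PP'_in[OF z] by (simp add: Pin'_def)
qed

lemma geod_eq: "geod_radius (pi/4) s = PP s"
  unfolding geod_radius_def
proof (rule the_equality[of "is_geod_radius (pi/4) s", OF is_geod_PP])
  fix q assume "is_geod_radius (pi/4) s q"
  then obtain q' where q: "\<And>t. DERIV q t :> q' t"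
    "\<And>t. DERIV q' t :> deriv (warp (pi/4)) (q t) / warp (pi/4) (q t) * (1 - (q' t)\<^sup>2)"
    "q 0 = s" "q' 0 = 0"
    unfolding is_geod_radius_def by blast
  have z: "\<bar>0::real\<bar> \<le> ell s" using ell_bounds by simp
  show "q = PP s"
  proof (rule ode_unique[where c = cfun])
    show "DERIV (PP s) t :> PP' s t" for t by (rule D_PP)
    show "DERIV (PP' s) t :> cfun (PP s t) * (1 - (PP' s t)\<^sup>2)" for t
      using D_PP'[of t] unfolding QQ_eq .
    show "DERIV q t :> q' t" for t by (rule q(1))
    show "DERIV q' t :> cfun (q t) * (1 - (q' t)\<^sup>2)" for t
      using q(2)[of t] unfolding cfun_def .
    show "q 0 = PP s 0" using q(3) PP_in[OF z] Pin0 by simp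
    show "q' 0 = PP' s 0" using q(4) PP'_in[OF z] by (simp add: Pin'_def)
    show "PP s t > 0" for t by (rule PP_pos)
  qed (rule cfun_lip)
qed

lemma deriv_PP: "deriv (PP s) t = PP' s t" by (rule DERIV_imp_deriv[OF D_PP])

lemma deriv_geod: "deriv (geod_radius (pi/4) s) t = PP' s t"
  unfolding geod_eq by (rule DERIV_imp_deriv[OF D_PP])

lemma Kcurv_s: "Kcurv s (pi/4) t =
   (PP' s t)\<^sup>2 * Kpar (pi/4) (PP s t) + (1 - (PP' s t)\<^sup>2) * ((1 - (A0' (PP s t))\<^sup>2) / (A0 (PP s t))\<^sup>2)"
  using s0 unfolding Kcurv_def Kperp_def warp_eq geod_eq deriv_A0 deriv_PP
  by (simp add: Let_def)

lemma Kcurv_in: assumes "\<bar>t\<bar> < ell s" shows "Kcurv s (pi/4) t = 1"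
proof -
  have t: "\<bar>t\<bar> \<le> ell s" using assms by simp
  have p: "PP s t = Pin s t" "Pin s t \<le> pi/4" using PP_in[OF t] Pin_le[OF t] by auto
  have sn: "sin (Pin s t) \<noteq> 0" using sin_Pin Sf_pos[of t] by simp
  have k1: "Kpar (pi/4) (PP s t) = 1" using p by (simp add: Kpar_cases)
  have k2: "(1 - (A0' (PP s t))\<^sup>2) / (A0 (PP s t))\<^sup>2 = 1"
    using p sn by (simp add: A0_def A0'_def cos_squared_eq)
  show ?thesis unfolding Kcurv_s k1 k2 by simp
qed

lemma Kcurv_out: assumes "\<bar>t\<bar> > ell s"
  shows "Kcurv s (pi/4) t = -1 + 4 * (sin s)\<^sup>2 * (Ffun \<bar>t\<bar> s) powi (-4)"
proof -
  define T where "T = \<bar>t\<bar>"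
  define w where "w = Ffun T s"
  define e where "e = 2 * (sin s)\<^sup>2"
  have T: "T > ell s" using assms by (simp add: T_def)
  have w: "w > 1" unfolding w_def using F_gt1[OF T] .
  have pp: "PP s t = Pout s T" unfolding T_def using PP_out assms by simp
  have gt: "Pout s T > pi/4" using Pout_gt[OF T] .
  have A: "A0 (PP s t) = sqrt 2 / 2 * w" "A0' (PP s t) = sqrt 2 / 2 * w"
    unfolding pp using gt w by (simp_all add: A0_def A0'_def Pout_def w_def)
  have d2: "(PP' s t)\<^sup>2 = (Fd s T)\<^sup>2 / w\<^sup>2"
  proof (cases "t > 0")
    case True then show ?thesis using assms PP'_pos[of t] by (simp add: T_def w_def Pout'_def power_divide)
  next
    case False then have "t < - ell s" using assms by simp
    then show ?thesis using PP'_neg[of t] False by (simp add: T_def w_def Pout'_def power_divide)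
  qed
  have Fd2: "(Fd s T)\<^sup>2 = w\<^sup>2 - e" using FF[of T] unfolding w_def e_def by simp
  have kp: "Kpar (pi/4) (PP s t) = -1" using pp gt by (simp add: Kpar_cases)
  have "Kcurv s (pi/4) t = (w\<^sup>2 - e) / w\<^sup>2 * (-1) + (1 - (w\<^sup>2 - e) / w\<^sup>2) *
          ((1 - (sqrt 2 / 2 * w)\<^sup>2) / (sqrt 2 / 2 * w)\<^sup>2)"
    unfolding Kcurv_s kp A d2 Fd2 ..
  also have "(sqrt 2 / 2 * w)\<^sup>2 = w\<^sup>2 / 2" by (simp add: power_mult_distrib power_divide)
  also have "(w\<^sup>2 - e) / w\<^sup>2 * (-1) + (1 - (w\<^sup>2 - e) / w\<^sup>2) * ((1 - w\<^sup>2 / 2) / (w\<^sup>2 / 2))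
      = -1 + 2 * e / w ^ 4"
    using w by (simp add: field_simps power2_eq_square power4_eq_xxxx)
  also have "\<dots> = -1 + 4 * (sin s)\<^sup>2 * (Ffun \<bar>t\<bar> s) powi (-4)"
    unfolding e_def w_def T_def by (simp add: power_int_minus divide_inverse)
  finally show ?thesis .
qed

end


theorem lemma2p2:
  fixes n :: nat and s :: real
  assumes "n \<ge> 2" and "0 \<le> s" and "s < pi/4"
  shows "(\<forall>t. \<bar>t\<bar> < ell s \<longrightarrow> Kcurv s (pi/4) t = 1) \<and>
         (\<forall>t. \<bar>t\<bar> > ell s \<longrightarrow>
              Kcurv s (pi/4) t = -1 + 4 * (sin s)\<^sup>2 * (Ffun \<bar>t\<bar> s) powi (-4))"
proof (cases "s = 0")
  case True
  have a: "arccos (cos (pi/4)) = pi/4" by (rule arccos_cos) auto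
  have e: "ell s = pi/4" unfolding True ell_def using a by simp
  show ?thesis unfolding Kcurv_def using True e by (auto simp: Kpar_cases)
next
  case False
  then interpret geo s using assms by unfold_locales auto
  show ?thesis using Kcurv_in Kcurv_out by blast
qed

end
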